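(* If $r\ge 2$ and $t\ge 1$, then $6\le \mathrm{gp}(P_r\boxtimes C_{2t+1})\le 7$. Moreover, if $t\in\{1,2\}$ or $r=2$, then $\mathrm{gp}(P_r\boxtimes C_{2t+1})=6$.
   Context: All graphs are finite and simple; $P_r$ is the path on $r$ vertices and $C_m$ the cycle on $m$ vertices. The strong product $G\boxtimes H$ has vertex set $V(G)\times V(H)$, with distinct $(g,h),(g',h')$ adjacent iff ($g=g'$ or $gg'\in E(G)$) and ($h=h'$ or $hh'\in E(H)$). For a connected graph $G$, a set $S\subseteq V(G)$ is a general position set if no three pairwise distinct vertices of $S$ lie on a common geodesic (shortest path); $\mathrm{gp}(G)$ is the maximum cardinality of a general position set. *)

theory Defs
  imports Main
begin

text \<open>A finite simple graph is represented by a vertex set and a symmetric,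
irreflexive adjacency relation (only its restriction to the vertex set matters).\<close>

type_synonym 'a graph = "'a set \<times> ('a \<Rightarrow> 'a \<Rightarrow> bool)"

definition verts :: "'a graph \<Rightarrow> 'a set" where "verts G = fst G"
definition adj :: "'a graph \<Rightarrow> 'a \<Rightarrow> 'a \<Rightarrow> bool" where "adj G = snd G"

definition path_graph :: "nat \<Rightarrow> nat graph" where
  "path_graph r = ({..<r}, \<lambda>i j. i + 1 = j \<or> j + 1 = i)"

text \<open>Cycle C_m on vertices 0..m-1 (m \<ge> 3).\<close>
definition cycle_graph :: "nat \<Rightarrow> nat graph" where
  "cycle_graph m = ({..<m}, \<lambda>i j. i \<noteq> j \<and> (j = (i + 1) mod m \<or> i = (j + 1) mod m))"

definition strong_product :: "'a graph \<Rightarrow> 'b graph \<Rightarrow> ('a \<times> 'b) graph" where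
  "strong_product G H = (verts G \<times> verts H,
     \<lambda>(g, h) (g', h'). (g, h) \<noteq> (g', h') \<and> (g = g' \<or> adj G g g') \<and> (h = h' \<or> adj H h h'))"

text \<open>A walk is a nonempty list of vertices, consecutive ones adjacent;
its length is the number of edges, length xs - 1.\<close>
definition is_walk :: "'a graph \<Rightarrow> 'a list \<Rightarrow> bool" where
  "is_walk G xs \<longleftrightarrow> xs \<noteq> [] \<and> set xs \<subseteq> verts G \<and>
     (\<forall>i. Suc i < length xs \<longrightarrow> adj G (xs ! i) (xs ! Suc i))"

definition dist :: "'a graph \<Rightarrow> 'a \<Rightarrow> 'a \<Rightarrow> nat" where
  "dist G u v = (LEAST n. \<exists>xs. is_walk G xs \<and> hd xs = u \<and> last xs = v \<and> length xs = Suc n)"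

definition geodesic :: "'a graph \<Rightarrow> 'a list \<Rightarrow> bool" where
  "geodesic G xs \<longleftrightarrow> is_walk G xs \<and> length xs = Suc (dist G (hd xs) (last xs))"

definition gp_set :: "'a graph \<Rightarrow> 'a set \<Rightarrow> bool" where
  "gp_set G S \<longleftrightarrow> S \<subseteq> verts G \<and>
     (\<forall>u\<in>S. \<forall>v\<in>S. \<forall>w\<in>S. u \<noteq> v \<and> v \<noteq> w \<and> u \<noteq> w \<longrightarrow>
        \<not> (\<exists>P. geodesic G P \<and> {u, v, w} \<subseteq> set P))"

definition gp :: "'a graph \<Rightarrow> nat" where
  "gp G = Max {card S | S. gp_set G S}"

end

theory Submission
  imports Defs
begin


definition ad :: "nat \<Rightarrow> nat \<Rightarrow> nat" where "ad a b = (if a \<le> b then b - a else a - b)"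
definition dc :: "nat \<Rightarrow> nat \<Rightarrow> nat \<Rightarrow> nat" where "dc m a b = min (ad a b) (m - ad a b)"
definition DD :: "nat \<Rightarrow> nat \<times> nat \<Rightarrow> nat \<times> nat \<Rightarrow> nat" where
  "DD m u v = max (ad (fst u) (fst v)) (dc m (snd u) (snd v))"

abbreviation GG :: "nat \<Rightarrow> nat \<Rightarrow> (nat \<times> nat) graph" where
  "GG r m \<equiv> strong_product (path_graph r) (cycle_graph m)"

lemma verts_GG: "verts (GG r m) = {..<r} \<times> {..<m}"
  by (simp add: verts_def strong_product_def path_graph_def cycle_graph_def)

lemma adj_GG: "adj (GG r m) (i,a) (j,b) \<longleftrightarrow> (i,a) \<noteq> (j,b) \<and> (i = j \<or> i + 1 = j \<or> j + 1 = i) \<and>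
   (a = b \<or> a \<noteq> b \<and> (b = (a+1) mod m \<or> a = (b+1) mod m))"
  by (simp add: adj_def strong_product_def path_graph_def cycle_graph_def)

lemma mod_suc_lt: "a < m \<Longrightarrow> (a+1) mod (m::nat) = (if a + 1 = m then 0 else a + 1)"
  by auto

lemma cyc_adj: "a < m \<Longrightarrow> b < m \<Longrightarrow> 3 \<le> m \<Longrightarrow>
  (a = b \<or> a \<noteq> b \<and> (b = (a+1) mod m \<or> a = (b+1) mod m)) \<longleftrightarrow> dc m a b \<le> 1"
  unfolding mod_suc_lt dc_def ad_def min_def by (auto split: if_splits)

lemma path_adj: "(i = j \<or> i + 1 = j \<or> j + 1 = i) \<longleftrightarrow> ad i j \<le> 1"
  by (simp add: ad_def) arith

lemma adj_iff: "3 \<le> m \<Longrightarrow> u \<in> verts (GG r m) \<Longrightarrow> v \<in> verts (GG r m) \<Longrightarrow>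
   adj (GG r m) u v \<longleftrightarrow> u \<noteq> v \<and> DD m u v \<le> 1"
  apply (cases u; cases v)
  apply (simp only: adj_GG verts_GG DD_def)
  apply (subst cyc_adj)
  apply (auto simp: ad_def)
  done

lemma ad_sym: "ad a b = ad b a" by (simp add: ad_def)
lemma dc_sym: "dc m a b = dc m b a" by (simp add: dc_def ad_sym)
lemma DD_sym: "DD m u v = DD m v u" by (simp add: DD_def ad_sym dc_sym)

lemma ad_tri: "ad a c \<le> ad a b + ad b c" unfolding ad_def by auto
lemma fm_sum: "x + y \<le> m \<Longrightarrow> min (x + y) (m - (x + y)) \<le> min x (m - x) + min y (m - (y::nat))"
  unfolding min_def by auto
lemma fm_diff: "y \<le> x \<Longrightarrow> x \<le> m \<Longrightarrow> min (x - y) (m - (x - y)) \<le> min x (m - x) + min y (m - (y::nat))"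
  unfolding min_def by auto

lemma dc_tri: "a < m \<Longrightarrow> b < m \<Longrightarrow> c < m \<Longrightarrow> dc m a c \<le> dc m a b + dc m b c"
proof -
  assume h: "a < m" "b < m" "c < m"
  consider "ad a c = ad a b + ad b c" | "ad a c = ad a b - ad b c \<and> ad b c \<le> ad a b" | "ad a c = ad b c - ad a b \<and> ad a b \<le> ad b c"
    unfolding ad_def by (cases "a \<le> b"; cases "b \<le> c"; cases "a \<le> c") auto
  then show ?thesis
  proof cases
    case 1
    have "ad a c \<le> m" using h unfolding ad_def by auto
    then show ?thesis using fm_sum[of "ad a b" "ad b c" m] 1 unfolding dc_def by simp
  next
    case 2
    have "ad a b \<le> m" using h unfolding ad_def by auto
    then show ?thesis using fm_diff[of "ad b c" "ad a b" m] 2 unfolding dc_def by simp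
  next
    case 3
    have "ad b c \<le> m" using h unfolding ad_def by auto
    then show ?thesis using fm_diff[of "ad a b" "ad b c" m] 3 unfolding dc_def by (simp add: add.commute)
  qed
qed

lemma DD_tri: "snd u < m \<Longrightarrow> snd v < m \<Longrightarrow> snd w < m \<Longrightarrow> DD m u w \<le> DD m u v + DD m v w"
  using ad_tri[of "fst u" "fst w" "fst v"] dc_tri[of "snd u" m "snd v" "snd w"]
  unfolding DD_def by linarith

lemma DD_refl[simp]: "DD m u u = 0" by (simp add: DD_def dc_def ad_def)

lemma DD_0: "snd u < m \<Longrightarrow> snd v < m \<Longrightarrow> DD m u v = 0 \<Longrightarrow> u = v"
proof -
  assume a: "snd u < m" "snd v < m" "DD m u v = 0"
  hence "ad (fst u) (fst v) = 0" "dc m (snd u) (snd v) = 0" by (auto simp: DD_def)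
  hence "fst u = fst v" "snd u = snd v" using a(1,2) unfolding ad_def dc_def by (auto split: if_splits)
  thus ?thesis by (simp add: prod_eq_iff)
qed

lemma fm_step: "(k' = k - 1 \<and> 2 * k \<le> m \<and> 1 \<le> k) \<or> ((k' = k + 1 \<or> k' = m - k - 1) \<and> m < 2 * k \<and> k < m)
   \<Longrightarrow> min k' (m - k') = min k (m - k) - (1::nat)"
  unfolding min_def by auto

lemma cyc_step: "a < m \<Longrightarrow> b < m \<Longrightarrow> \<exists>a'<m. dc m a a' \<le> 1 \<and> dc m a' b = dc m a b - 1"
proof (cases "a = b")
  case True
  assume "a < m"
  then show ?thesis using True by (intro exI[of _ a]) (simp add: dc_def ad_def)
next
  case False
  assume ab: "a < m" "b < m"
  have "\<exists>a'<m. (ad a a' = 1 \<or> ad a a' = m - 1) \<and>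
     ((ad a' b = ad a b - 1 \<and> 2 * ad a b \<le> m \<and> 1 \<le> ad a b) \<or>
      ((ad a' b = ad a b + 1 \<or> ad a' b = m - ad a b - 1) \<and> m < 2 * ad a b \<and> ad a b < m))"
  proof (cases "a < b")
    case True
    have k: "ad a b = b - a" using True by (simp add: ad_def)
    show ?thesis
    proof (cases "2 * (b - a) \<le> m")
      case True
      have "ad a (a+1) = 1" "ad (a+1) b = b - a - 1" using \<open>a < b\<close> by (auto simp: ad_def)
      then show ?thesis using True ab \<open>a < b\<close> k by (intro exI[of _ "a+1"]) (simp; linarith?)
    next
      case c2: False
      show ?thesis
      proof (cases "a = 0")
        case True
        have "ad a (m-1) = m - 1" "ad (m-1) b = m - (b - a) - 1" using True ab by (auto simp: ad_def)
        then show ?thesis using True ab \<open>a < b\<close> c2 k by (intro exI[of _ "m - 1"]) (simp; linarith?)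
      next
        case False
        have "ad a (a-1) = 1" "ad (a-1) b = b - a + 1" using False \<open>a < b\<close> by (auto simp: ad_def)
        then show ?thesis using False ab \<open>a < b\<close> c2 k by (intro exI[of _ "a - 1"]) (simp; linarith?)
      qed
    qed
  next
    case False
    hence ba: "b < a" using \<open>a \<noteq> b\<close> by simp
    have k: "ad a b = a - b" using ba by (simp add: ad_def)
    show ?thesis
    proof (cases "2 * (a - b) \<le> m")
      case True
      have "ad a (a-1) = 1" "ad (a-1) b = a - b - 1" using ba by (auto simp: ad_def)
      then show ?thesis using True ab ba k by (intro exI[of _ "a-1"]) (simp; linarith?)
    next
      case c2: False
      show ?thesis
      proof (cases "a + 1 = m")
        case True
        have "ad a 0 = m - 1" "ad 0 b = m - (a - b) - 1" using True ba by (auto simp: ad_def)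
        then show ?thesis using True ab ba c2 k by (intro exI[of _ "0"]) (simp; linarith?)
      next
        case False
        have "ad a (a+1) = 1" "ad (a+1) b = a - b + 1" using ba by (auto simp: ad_def)
        then show ?thesis using False ab ba c2 k by (intro exI[of _ "a + 1"]) (simp; linarith?)
      qed
    qed
  qed
  then obtain a' where a': "a' < m" "ad a a' = 1 \<or> ad a a' = m - 1"
     "(ad a' b = ad a b - 1 \<and> 2 * ad a b \<le> m \<and> 1 \<le> ad a b) \<or>
      ((ad a' b = ad a b + 1 \<or> ad a' b = m - ad a b - 1) \<and> m < 2 * ad a b \<and> ad a b < m)" by blast
  have "dc m a' b = dc m a b - 1" unfolding dc_def by (rule fm_step[OF a'(3)])
  moreover have "dc m a a' \<le> 1" using a'(2) unfolding dc_def by auto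
  ultimately show ?thesis using a'(1) by blast
qed

lemma path_step: "\<exists>i'. i' \<le> max i j \<and> ad i i' \<le> 1 \<and> ad i' j = ad i j - 1"
proof (cases "i < j")
  case True
  then show ?thesis by (intro exI[of _ "i+1"]) (simp add: ad_def)
next
  case False
  show ?thesis
  proof (cases "i = j")
    case True then show ?thesis by (intro exI[of _ "i"]) (simp add: ad_def)
  next
    case False
    then show ?thesis using \<open>\<not> i < j\<close> by (intro exI[of _ "i-1"]) (simp add: ad_def)
  qed
qed

lemma max_minus1: "max (x - 1) (y - 1) = max x y - (1::nat)" by (simp add: max_def)

lemma DD_step:
  assumes "3 \<le> m" "u \<in> verts (GG r m)" "v \<in> verts (GG r m)" "u \<noteq> v"
  shows "\<exists>w \<in> verts (GG r m). adj (GG r m) u w \<and> DD m w v = DD m u v - 1"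
proof -
  obtain i a j b where u: "u = (i,a)" and v: "v = (j,b)" by (cases u; cases v) auto
  have ij: "i < r" "j < r" "a < m" "b < m" using assms(2,3) u v by (auto simp: verts_GG)
  obtain a' where a': "a' < m" "dc m a a' \<le> 1" "dc m a' b = dc m a b - 1" using cyc_step[OF ij(3,4)] by blast
  obtain i' where i': "i' \<le> max i j" "ad i i' \<le> 1" "ad i' j = ad i j - 1" using path_step by blast
  have w: "(i',a') \<in> verts (GG r m)" using i'(1) ij a'(1) by (auto simp: verts_GG)
  have d: "DD m (i',a') v = DD m u v - 1" using i'(3) a'(3) u v by (simp add: DD_def max_minus1)
  have "DD m u v \<noteq> 0" using DD_0[of u m v] assms(4) ij u v by auto
  hence ne: "u \<noteq> (i',a')" using d by auto
  have "DD m u (i',a') \<le> 1" using i'(2) a'(2) u by (simp add: DD_def)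
  hence "adj (GG r m) u (i',a')" using adj_iff[OF assms(1,2) w] ne by simp
  thus ?thesis using w d by blast
qed

lemma is_walk_Cons: "is_walk G (x # xs) \<longleftrightarrow> x \<in> verts G \<and> (xs = [] \<or> adj G x (hd xs) \<and> is_walk G xs)"
proof
  assume h: "is_walk G (x # xs)"
  show "x \<in> verts G \<and> (xs = [] \<or> adj G x (hd xs) \<and> is_walk G xs)"
  proof (cases xs)
    case Nil then show ?thesis using h by (simp add: is_walk_def)
  next
    case (Cons y ys)
    have "adj G x y" using h Cons by (auto simp: is_walk_def)
    moreover have "is_walk G xs" using h Cons unfolding is_walk_def
    proof (intro conjI allI impI)
      fix i assume "Suc i < length xs"
      thus "adj G (xs ! i) (xs ! Suc i)" using h[unfolded is_walk_def] by (metis Suc_less_eq length_Cons nth_Cons_Suc)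
    qed (use h Cons in auto)
    ultimately show ?thesis using h Cons by (simp add: is_walk_def)
  qed
next
  assume h: "x \<in> verts G \<and> (xs = [] \<or> adj G x (hd xs) \<and> is_walk G xs)"
  show "is_walk G (x # xs)"
  proof (cases xs)
    case Nil then show ?thesis using h by (simp add: is_walk_def)
  next
    case (Cons y ys)
    then show ?thesis using h unfolding is_walk_def
      by (auto simp: nth_Cons split: nat.splits)
  qed
qed


lemma walk_exists_n:
  assumes "3 \<le> m"
  shows "\<forall>u. u \<in> verts (GG r m) \<longrightarrow> v \<in> verts (GG r m) \<longrightarrow> DD m u v = n \<longrightarrow>
     (\<exists>P. is_walk (GG r m) P \<and> hd P = u \<and> last P = v \<and> length P = Suc n)"
proof (induction n)
  case 0
  show ?case
  proof (intro allI impI)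
    fix u assume h: "u \<in> verts (GG r m)" "v \<in> verts (GG r m)" "DD m u v = 0"
    hence "u = v" using DD_0[of u m v] by (auto simp: verts_GG)
    thus "\<exists>P. is_walk (GG r m) P \<and> hd P = u \<and> last P = v \<and> length P = Suc 0"
      using h by (intro exI[of _ "[u]"]) (simp add: is_walk_def)
  qed
next
  case (Suc n)
  show ?case
  proof (intro allI impI)
    fix u assume h: "u \<in> verts (GG r m)" "v \<in> verts (GG r m)" "DD m u v = Suc n"
    hence "u \<noteq> v" by auto
    then obtain w where w: "w \<in> verts (GG r m)" "adj (GG r m) u w" "DD m w v = n"
      using DD_step[OF assms h(1,2)] h(3) by auto
    then obtain P where P: "is_walk (GG r m) P" "hd P = w" "last P = v" "length P = Suc n"
      using Suc.IH h(2) by blast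
    have "P \<noteq> []" using P(4) by auto
    hence "is_walk (GG r m) (u # P)" using P w h(1) by (simp add: is_walk_Cons)
    thus "\<exists>P. is_walk (GG r m) P \<and> hd P = u \<and> last P = v \<and> length P = Suc (Suc n)"
      using P \<open>P \<noteq> []\<close> by (intro exI[of _ "u # P"]) auto
  qed
qed

lemma walk_le:
  assumes "3 \<le> m" "is_walk (GG r m) P" "i \<le> j" "j < length P"
  shows "DD m (P ! i) (P ! j) \<le> j - i"
  using assms(3,4)
proof (induction j)
  case 0 then show ?case by simp
next
  case (Suc j)
  show ?case
  proof (cases "i = Suc j")
    case True then show ?thesis by simp
  next
    case False
    hence ij: "i \<le> j" using Suc.prems by simp
    have IH: "DD m (P ! i) (P ! j) \<le> j - i" using Suc.IH ij Suc.prems by simp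
    have V: "P ! i \<in> verts (GG r m)" "P ! j \<in> verts (GG r m)" "P ! Suc j \<in> verts (GG r m)"
    proof -
      have "set P \<subseteq> verts (GG r m)" using assms(2) by (simp add: is_walk_def)
      thus "P ! i \<in> verts (GG r m)" "P ! j \<in> verts (GG r m)" "P ! Suc j \<in> verts (GG r m)"
        using Suc.prems ij by (auto intro!: subsetD[OF _ nth_mem])
    qed
    have "adj (GG r m) (P ! j) (P ! Suc j)" using assms(2) Suc.prems unfolding is_walk_def by blast
    hence "DD m (P ! j) (P ! Suc j) \<le> 1" using adj_iff[OF assms(1) V(2,3)] by simp
    moreover have "DD m (P ! i) (P ! Suc j) \<le> DD m (P ! i) (P ! j) + DD m (P ! j) (P ! Suc j)"
      by (rule DD_tri) (use V in \<open>auto simp: verts_GG\<close>)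
    ultimately show ?thesis using IH ij by linarith
  qed
qed

lemma walk_hd_last:
  assumes "3 \<le> m" "is_walk (GG r m) P"
  shows "DD m (hd P) (last P) \<le> length P - 1"
proof -
  have "P \<noteq> []" using assms(2) by (simp add: is_walk_def)
  thus ?thesis using walk_le[OF assms, of 0 "length P - 1"] by (simp add: hd_conv_nth last_conv_nth)
qed

lemma dist_eq:
  assumes "3 \<le> m" "u \<in> verts (GG r m)" "v \<in> verts (GG r m)"
  shows "dist (GG r m) u v = DD m u v"
  unfolding dist_def
proof (rule Least_equality)
  show "\<exists>xs. is_walk (GG r m) xs \<and> hd xs = u \<and> last xs = v \<and> length xs = Suc (DD m u v)"
    using walk_exists_n[OF assms(1)] assms(2,3) by blast
next
  fix n assume "\<exists>xs. is_walk (GG r m) xs \<and> hd xs = u \<and> last xs = v \<and> length xs = Suc n"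
  then obtain xs where "is_walk (GG r m) xs" "hd xs = u" "last xs = v" "length xs = Suc n" by blast
  thus "DD m u v \<le> n" using walk_hd_last[OF assms(1), of r xs] by simp
qed

lemma walk_append:
  assumes "is_walk G xs" "is_walk G ys" "last xs = hd ys"
  shows "is_walk G (xs @ tl ys)"
  using assms
proof (induction xs)
  case Nil then show ?case by (simp add: is_walk_def)
next
  case (Cons x xs)
  show ?case
  proof (cases "xs = []")
    case True
    then show ?thesis using Cons.prems
      by (cases ys) (auto simp: is_walk_Cons)
  next
    case False
    have "is_walk G (xs @ tl ys)" using Cons False by (simp add: is_walk_Cons)
    then show ?thesis using Cons.prems False by (simp add: is_walk_Cons)
  qed
qed


definition bad :: "nat \<Rightarrow> nat \<times> nat \<Rightarrow> nat \<times> nat \<Rightarrow> nat \<times> nat \<Rightarrow> bool" where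
  "bad m x y z \<longleftrightarrow> DD m x y + DD m y z = DD m x z"

lemma geodesic_mid:
  assumes m: "3 \<le> m" and g: "geodesic (GG r m) P" and ijk: "i < j" "j < k" "k < length P"
  shows "bad m (P ! i) (P ! j) (P ! k)"
proof -
  have w: "is_walk (GG r m) P" using g by (simp add: geodesic_def)
  have ne: "P \<noteq> []" using w by (simp add: is_walk_def)
  have sub: "set P \<subseteq> verts (GG r m)" using w by (simp add: is_walk_def)
  define l where "l = length P - 1"
  have lk: "k \<le> l" using ijk l_def by simp
  have V: "\<And>q. q < length P \<Longrightarrow> snd (P ! q) < m"
    using sub by (auto simp: verts_GG dest!: nth_mem)
  have hl: "hd P = P ! 0" "last P = P ! l" using ne by (simp_all add: hd_conv_nth last_conv_nth l_def)
  have "dist (GG r m) (hd P) (last P) = DD m (hd P) (last P)"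
  proof -
    have "hd P \<in> verts (GG r m)" "last P \<in> verts (GG r m)" using sub ne by auto
    thus ?thesis using dist_eq[OF m] by blast
  qed
  hence "length P = Suc (DD m (hd P) (last P))" using g by (simp add: geodesic_def)
  hence d0l: "DD m (P ! 0) (P ! l) = l" using hl l_def by simp
  have l1: "l < length P" using ne l_def by simp
  have Vs: "snd (P ! 0) < m" "snd (P ! i) < m" "snd (P ! j) < m" "snd (P ! k) < m" "snd (P ! l) < m"
  proof -
    have "0 < length P" "i < length P" "j < length P" using l1 ijk by linarith+
    thus "snd (P ! 0) < m" "snd (P ! i) < m" "snd (P ! j) < m" "snd (P ! k) < m" "snd (P ! l) < m"
      using V ijk l1 by blast+
  qed
  have t1: "DD m (P ! 0) (P ! l) \<le> DD m (P ! 0) (P ! i) + DD m (P ! i) (P ! l)"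
    by (rule DD_tri) (use Vs in auto)
  have t2: "DD m (P ! i) (P ! l) \<le> DD m (P ! i) (P ! k) + DD m (P ! k) (P ! l)"
    by (rule DD_tri) (use Vs in auto)
  have t3: "DD m (P ! i) (P ! k) \<le> DD m (P ! i) (P ! j) + DD m (P ! j) (P ! k)"
    by (rule DD_tri) (use Vs in auto)
  have w1: "DD m (P ! 0) (P ! i) \<le> i" using walk_le[OF m w, of 0 i] ijk by simp
  have w2: "DD m (P ! k) (P ! l) \<le> l - k" using walk_le[OF m w, of k l] lk l1 by simp
  have w3: "DD m (P ! i) (P ! j) \<le> j - i" using walk_le[OF m w, of i j] ijk by simp
  have w4: "DD m (P ! j) (P ! k) \<le> k - j" using walk_le[OF m w, of j k] ijk by simp
  have w5: "DD m (P ! i) (P ! k) \<le> k - i" using walk_le[OF m w, of i k] ijk by simp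
  show ?thesis unfolding bad_def using t1 t2 t3 w1 w2 w3 w4 w5 d0l ijk lk by linarith
qed

lemma geo_three:
  assumes m: "3 \<le> m" and g: "geodesic (GG r m) P" and xyz: "{x, y, z} \<subseteq> set P"
    and d: "x \<noteq> y" "y \<noteq> z" "x \<noteq> z"
  shows "bad m x y z \<or> bad m y x z \<or> bad m x z y"
proof -
  obtain a b c where abc: "a < length P" "b < length P" "c < length P" "P ! a = x" "P ! b = y" "P ! c = z"
    using xyz by (auto simp: in_set_conv_nth)
  have "a \<noteq> b" "b \<noteq> c" "a \<noteq> c" using abc d by auto
  have M: "\<And>i j k. i < j \<Longrightarrow> j < k \<Longrightarrow> k < length P \<Longrightarrow> bad m (P ! i) (P ! j) (P ! k)"
    using geodesic_mid[OF m g] by blast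
  have S: "\<And>p q s. bad m p q s \<Longrightarrow> bad m s q p" unfolding bad_def by (simp add: DD_sym add.commute)
  consider "a < b" "b < c" | "a < c" "c < b" | "b < a" "a < c" | "b < c" "c < a" | "c < a" "a < b" | "c < b" "b < a"
    using \<open>a \<noteq> b\<close> \<open>b \<noteq> c\<close> \<open>a \<noteq> c\<close> by linarith
  then show ?thesis
  proof cases
    case 1 then show ?thesis using M[of a b c] abc by simp
  next
    case 2 then show ?thesis using M[of a c b] abc by simp
  next
    case 3 then show ?thesis using M[of b a c] abc by simp
  next
    case 4 then show ?thesis using M[of b c a] abc S by blast
  next
    case 5 then show ?thesis using M[of c a b] abc S by blast
  next
    case 6 then show ?thesis using M[of c b a] abc S by blast
  qed
qed

lemma bad_geo:
  assumes m: "3 \<le> m" and V: "x \<in> verts (GG r m)" "y \<in> verts (GG r m)" "z \<in> verts (GG r m)"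
    and b: "bad m x y z"
  shows "\<exists>P. geodesic (GG r m) P \<and> {x, y, z} \<subseteq> set P"
proof -
  obtain P1 where P1: "is_walk (GG r m) P1" "hd P1 = x" "last P1 = y" "length P1 = Suc (DD m x y)"
    using walk_exists_n[OF m] V by blast
  obtain P2 where P2: "is_walk (GG r m) P2" "hd P2 = y" "last P2 = z" "length P2 = Suc (DD m y z)"
    using walk_exists_n[OF m] V by blast
  have ne: "P1 \<noteq> []" "P2 \<noteq> []" using P1 P2 by auto
  define P where "P = P1 @ tl P2"
  have w: "is_walk (GG r m) P" unfolding P_def using walk_append P1 P2 by metis
  have hP: "hd P = x" using P1 ne by (simp add: P_def)
  have lP: "last P = z"
  proof (cases "tl P2 = []")
    case True
    hence "P2 = [hd P2]" using ne by (cases P2) auto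
    hence "z = y" using P2 by (metis last_ConsL)
    thus ?thesis using True P1 by (simp add: P_def)
  next
    case False
    hence "last (tl P2) = last P2" using ne by (cases P2) auto
    thus ?thesis using False P2 by (simp add: P_def)
  qed
  have len: "length P = Suc (DD m x z)" using P1 P2 b ne by (simp add: P_def bad_def)
  have "dist (GG r m) x z = DD m x z" using dist_eq[OF m V(1,3)] .
  hence g: "geodesic (GG r m) P" using w hP lP len by (simp add: geodesic_def)
  have "x \<in> set P" using hP w by (metis hd_in_set is_walk_def)
  moreover have "z \<in> set P" using lP w by (metis last_in_set is_walk_def)
  moreover have "y \<in> set P"
  proof -
    have "y \<in> set P1" using P1 ne by (metis last_in_set)
    thus ?thesis by (simp add: P_def)
  qed
  ultimately show ?thesis using g by blast
qed

lemma gp_set_no_bad: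
  assumes m: "3 \<le> m" and gs: "gp_set (GG r m) S" and xyz: "x \<in> S" "y \<in> S" "z \<in> S"
    and d: "x \<noteq> y" "y \<noteq> z" "x \<noteq> z"
  shows "\<not> bad m x y z"
proof
  assume b: "bad m x y z"
  have sub: "S \<subseteq> verts (GG r m)" using gs by (simp add: gp_set_def)
  obtain P where "geodesic (GG r m) P" "{x, y, z} \<subseteq> set P" using bad_geo[OF m _ _ _ b] sub xyz by blast
  thus False using gs xyz d unfolding gp_set_def by blast
qed

lemma gp_set_intro:
  assumes m: "3 \<le> m" and sub: "S \<subseteq> verts (GG r m)"
    and nb: "\<And>x y z. x \<in> S \<Longrightarrow> y \<in> S \<Longrightarrow> z \<in> S \<Longrightarrow> x \<noteq> y \<Longrightarrow> y \<noteq> z \<Longrightarrow> x \<noteq> z \<Longrightarrow> \<not> bad m x y z"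
  shows "gp_set (GG r m) S"
  unfolding gp_set_def
proof (intro conjI sub ballI impI notI)
  fix u v w assume h: "u \<in> S" "v \<in> S" "w \<in> S" "u \<noteq> v \<and> v \<noteq> w \<and> u \<noteq> w"
    and "\<exists>P. geodesic (GG r m) P \<and> {u, v, w} \<subseteq> set P"
  then obtain P where "geodesic (GG r m) P" "{u, v, w} \<subseteq> set P" by blast
  hence "bad m u v w \<or> bad m v u w \<or> bad m u w v" using geo_three[OF m] h by blast
  thus False using nb h by metis
qed


definition lq :: "nat \<Rightarrow> nat \<times> nat \<Rightarrow> nat \<times> nat \<Rightarrow> bool" where
  "lq m x y \<longleftrightarrow> fst x \<le> fst y \<and> dc m (snd x) (snd y) \<le> fst y - fst x"

lemma lq_trans: "snd x < m \<Longrightarrow> snd y < m \<Longrightarrow> snd z < m \<Longrightarrow> lq m x y \<Longrightarrow> lq m y z \<Longrightarrow> lq m x z"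
  using dc_tri[of "snd x" m "snd y" "snd z"] unfolding lq_def by linarith

lemma lq_antisym: "snd x < m \<Longrightarrow> snd y < m \<Longrightarrow> lq m x y \<Longrightarrow> lq m y x \<Longrightarrow> x = y"
  using DD_0[of x m y] unfolding lq_def DD_def by (simp add: ad_def)

lemma lq_DD: "lq m x y \<Longrightarrow> DD m x y = fst y - fst x"
  unfolding lq_def DD_def ad_def by simp

lemma chain_bad: "snd x < m \<Longrightarrow> snd y < m \<Longrightarrow> snd z < m \<Longrightarrow> lq m x y \<Longrightarrow> lq m y z \<Longrightarrow> bad m x y z"
  using lq_trans[of x m y z] lq_DD[of m x y] lq_DD[of m y z] lq_DD[of m x z]
  unfolding bad_def by (simp add: lq_def)

lemma incomp_DD: "\<not> lq m x y \<Longrightarrow> \<not> lq m y x \<Longrightarrow> DD m x y = dc m (snd x) (snd y) \<and> snd x \<noteq> snd y"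
proof -
  assume h: "\<not> lq m x y" "\<not> lq m y x"
  have lt: "ad (fst x) (fst y) < dc m (snd x) (snd y)"
  proof (cases "fst x \<le> fst y")
    case True
    have "ad (fst x) (fst y) = fst y - fst x" using True by (simp add: ad_def)
    thus ?thesis using h(1) True unfolding lq_def by linarith
  next
    case False
    have "ad (fst x) (fst y) = fst x - fst y" using False by (simp add: ad_def)
    moreover have "dc m (snd y) (snd x) = dc m (snd x) (snd y)" by (rule dc_sym)
    ultimately show ?thesis using h(2) False unfolding lq_def by linarith
  qed
  have "dc m (snd x) (snd x) = 0" by (simp add: dc_def ad_def)
  hence "snd x \<noteq> snd y" using lt by auto
  moreover have "DD m x y = dc m (snd x) (snd y)" using lt by (simp add: DD_def)
  ultimately show ?thesis by simp
qed

lemma cycle4: "a < b \<Longrightarrow> b < c \<Longrightarrow> c < d \<Longrightarrow> d < m \<Longrightarrow>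
   dc m a b + dc m b c = dc m a c \<or> dc m c d + dc m d a = dc m c a"
proof -
  assume h: "a < b" "b < c" "c < d" "d < m"
  have fl: "\<And>x. 2 * x \<le> m \<Longrightarrow> min x (m - x) = x" by (simp add: min_def)
  have fg: "\<And>x. m < 2 * x \<Longrightarrow> min x (m - x) = m - x" by (simp add: min_def)
  have ads: "ad a b = b - a" "ad b c = c - b" "ad a c = c - a" "ad c d = d - c" "ad d a = d - a" "ad c a = c - a"
    using h by (auto simp: ad_def)
  show ?thesis
  proof (cases "2 * (c - a) \<le> m")
    case True
    have "dc m a b = b - a" "dc m b c = c - b" "dc m a c = c - a"
      unfolding dc_def ads using True h by (subst fl; linarith)+
    then show ?thesis using h by simp
  next
    case False
    have "dc m c d = d - c" unfolding dc_def ads using False h by (subst fl; linarith)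
    moreover have "dc m d a = m - (d - a)" unfolding dc_def ads using False h by (subst fg; linarith)
    moreover have "dc m c a = m - (c - a)" unfolding dc_def ads using False h by (subst fg; linarith)
    ultimately show ?thesis using h by simp
  qed
qed


lemma finite_GG: "finite (verts (GG r m))" by (simp add: verts_GG)

lemma antichain_card:
  assumes m: "3 \<le> m" and gs: "gp_set (GG r m) S" and AS: "A \<subseteq> S"
    and anti: "\<And>x y. x \<in> A \<Longrightarrow> y \<in> A \<Longrightarrow> x \<noteq> y \<Longrightarrow> \<not> lq m x y"
  shows "card A \<le> 3"
proof (rule ccontr)
  assume "\<not> card A \<le> 3"
  hence c4: "4 \<le> card A" by simp
  have sub: "A \<subseteq> verts (GG r m)" using gs AS by (auto simp: gp_set_def)
  have fin: "finite A" using sub finite_GG finite_subset by blast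
  have inc: "\<And>x y. x \<in> A \<Longrightarrow> y \<in> A \<Longrightarrow> x \<noteq> y \<Longrightarrow> DD m x y = dc m (snd x) (snd y) \<and> snd x \<noteq> snd y"
    using anti incomp_DD by blast
  have inj: "inj_on snd A" unfolding inj_on_def using inc by blast
  have "card (snd ` A) = card A" using card_image[OF inj] .
  with c4 obtain T where T: "T \<subseteq> snd ` A" "card T = 4" "finite T"
    by (metis obtain_subset_with_card_n)
  define l where "l = sorted_list_of_set T"
  have l: "sorted_wrt (<) l" "set l = T" "length l = 4" using T by (simp_all add: l_def)
  define a where "a = l ! 0"
  define b where "b = l ! 1"
  define c where "c = l ! 2"
  define d where "d = l ! 3"
  have ord: "a < b" "b < c" "c < d" unfolding a_def b_def c_def d_def
    using sorted_wrt_nth_less[OF l(1)] l(3) by simp_all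
  have inT: "a \<in> snd ` A" "b \<in> snd ` A" "c \<in> snd ` A" "d \<in> snd ` A"
    unfolding a_def b_def c_def d_def using l(2,3) T(1) nth_mem[of _ l] by auto
  then obtain xa xb xc xd where X: "xa \<in> A" "xb \<in> A" "xc \<in> A" "xd \<in> A"
     "snd xa = a" "snd xb = b" "snd xc = c" "snd xd = d" by blast
  have "d < m" using X sub by (auto simp: verts_GG)
  have dxs: "xa \<noteq> xb" "xb \<noteq> xc" "xa \<noteq> xc" "xc \<noteq> xd" "xd \<noteq> xa" using X ord by auto
  consider "dc m a b + dc m b c = dc m a c" | "dc m c d + dc m d a = dc m c a"
    using cycle4[OF ord \<open>d < m\<close>] by blast
  then show False
  proof cases
    case 1
    have "DD m xa xb = dc m a b" "DD m xb xc = dc m b c" "DD m xa xc = dc m a c"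
      using inc[OF X(1,2) dxs(1)] inc[OF X(2,3) dxs(2)] inc[OF X(1,3) dxs(3)] X(5-8) by simp_all
    hence "bad m xa xb xc" using 1 unfolding bad_def by simp
    thus False using gp_set_no_bad[OF m gs, of xa xb xc] X AS dxs by auto
  next
    case 2
    have "DD m xc xd = dc m c d" "DD m xd xa = dc m d a" "DD m xc xa = dc m c a"
      using inc[OF X(3,4) dxs(4)] inc[OF X(4,1) dxs(5)] inc[of xc xa] X dxs(3) by simp_all
    hence "bad m xc xd xa" using 2 unfolding bad_def by simp
    thus False using gp_set_no_bad[OF m gs, of xc xd xa] X AS dxs by auto
  qed
qed

lemma gp_upper:
  assumes m: "3 \<le> m" and gs: "gp_set (GG r m) S"
  shows "card S \<le> 6"
proof -
  have sub: "S \<subseteq> verts (GG r m)" using gs by (auto simp: gp_set_def)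
  have fin: "finite S" using sub finite_GG finite_subset by blast
  have sm: "\<And>x. x \<in> S \<Longrightarrow> snd x < m" using sub by (auto simp: verts_GG)
  define A1 where "A1 = {x \<in> S. \<forall>w \<in> S. w \<noteq> x \<longrightarrow> \<not> lq m w x}"
  define A2 where "A2 = S - A1"
  have c1: "card A1 \<le> 3"
    by (rule antichain_card[OF m gs]) (auto simp: A1_def)
  have c2: "card A2 \<le> 3"
  proof (rule antichain_card[OF m gs])
    show "A2 \<subseteq> S" by (auto simp: A2_def)
  next
    fix y z assume h: "y \<in> A2" "z \<in> A2" "y \<noteq> z"
    show "\<not> lq m y z"
    proof
      assume yz: "lq m y z"
      obtain w where w: "w \<in> S" "w \<noteq> y" "lq m w y" using h(1) by (auto simp: A2_def A1_def)
      have S3: "y \<in> S" "z \<in> S" using h by (auto simp: A2_def)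
      have "w \<noteq> z"
      proof
        assume "w = z"
        hence "y = z" using lq_antisym[of y m z] yz w sm S3 by auto
        thus False using h by simp
      qed
      have "bad m w y z" using chain_bad[of w m y z] w yz sm S3 by auto
      thus False using gp_set_no_bad[OF m gs, of w y z] w S3 h \<open>w \<noteq> z\<close> by auto
    qed
  qed
  have "S = A1 \<union> A2" by (auto simp: A2_def A1_def)
  hence "card S \<le> card A1 + card A2" by (metis card_Un_le)
  thus ?thesis using c1 c2 by simp
qed



lemma S0_nobad:
  assumes t: "1 \<le> t" and m: "m = 2 * t + 1"
    and S: "x \<in> {0,1} \<times> {0,t,2*t}" "y \<in> {0,1} \<times> {0,t,2*t}" "z \<in> {0,1} \<times> {0,t,2*t}"
    and d: "x \<noteq> y" "y \<noteq> z" "x \<noteq> z"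
  shows "\<not> bad m x y z"
proof -
  have ads: "ad 0 t = t" "ad t 0 = t" "ad t (2*t) = t" "ad (2*t) t = t" "ad 0 (2*t) = 2*t" "ad (2*t) 0 = 2*t"
    by (simp_all add: ad_def)
  have mt: "m - t = t + 1" "m - 2 * t = 1" using m by simp_all
  have tab: "dc m 0 t = t" "dc m t 0 = t" "dc m t (2*t) = t" "dc m (2*t) t = t" "dc m 0 (2*t) = 1" "dc m (2*t) 0 = 1"
    unfolding dc_def ads mt using t by simp_all
  have tne: "t \<noteq> 0" "2 * t \<noteq> 0" "t \<noteq> 2 * t" "2 * t \<noteq> t" "0 \<noteq> t" "0 \<noteq> 2 * t" using t by simp_all
  have C1: "\<And>p q. p \<in> {0,t,2*t} \<Longrightarrow> q \<in> {0,t,2*t} \<Longrightarrow> p \<noteq> q \<Longrightarrow> 1 \<le> dc m p q"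
  proof -
    fix p q assume "p \<in> {0,t,2*t}" "q \<in> {0,t,2*t}" "p \<noteq> q"
    thus "1 \<le> dc m p q" using tab t by (elim insertE emptyE) simp_all
  qed
  have C3: "\<And>p q s. p \<in> {0,t,2*t} \<Longrightarrow> q \<in> {0,t,2*t} \<Longrightarrow> s \<in> {0,t,2*t} \<Longrightarrow> p \<noteq> q \<Longrightarrow> q \<noteq> s \<Longrightarrow> p \<noteq> s
     \<Longrightarrow> dc m p q + dc m q s \<noteq> dc m p s"
  proof -
    fix p q s assume "p \<in> {0,t,2*t}" "q \<in> {0,t,2*t}" "s \<in> {0,t,2*t}" "p \<noteq> q" "q \<noteq> s" "p \<noteq> s"
    thus "dc m p q + dc m q s \<noteq> dc m p s" using tab t by (elim insertE emptyE) simp_all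
  qed
  have F: "\<And>p q. p \<in> {0,1::nat} \<Longrightarrow> q \<in> {0,1} \<Longrightarrow> ad p q \<le> 1 \<and> (ad p q = 0 \<longleftrightarrow> p = q)"
    by (auto simp: ad_def)
  have D: "\<And>u v. u \<in> {0,1} \<times> {0,t,2*t} \<Longrightarrow> v \<in> {0,1} \<times> {0,t,2*t} \<Longrightarrow> u \<noteq> v \<Longrightarrow>
     DD m u v = (if snd u = snd v then 1 else dc m (snd u) (snd v))"
  proof -
    fix u v :: "nat \<times> nat" assume u: "u \<in> {0,1} \<times> {0,t,2*t}" and v: "v \<in> {0,1} \<times> {0,t,2*t}" and uv: "u \<noteq> v"
    have uf: "fst u \<in> {0,1}" "snd u \<in> {0,t,2*t}" using u unfolding mem_Times_iff by blast+
    have vf: "fst v \<in> {0,1}" "snd v \<in> {0,t,2*t}" using v unfolding mem_Times_iff by blast+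
    have f1: "ad (fst u) (fst v) \<le> 1" and f2: "ad (fst u) (fst v) = 0 \<longleftrightarrow> fst u = fst v"
      using F[OF uf(1) vf(1)] by blast+
    show "DD m u v = (if snd u = snd v then 1 else dc m (snd u) (snd v))"
    proof (cases "snd u = snd v")
      case True
      have "fst u \<noteq> fst v" using True uv by (simp add: prod_eq_iff)
      hence "ad (fst u) (fst v) = 1" using f1 f2 by linarith
      moreover have "dc m (snd u) (snd v) = 0" using True by (simp add: dc_def ad_def)
      ultimately show ?thesis using True by (simp add: DD_def)
    next
      case False
      have "1 \<le> dc m (snd u) (snd v)" using C1[OF uf(2) vf(2) False] .
      hence "max (ad (fst u) (fst v)) (dc m (snd u) (snd v)) = dc m (snd u) (snd v)" using f1 by simp
      then show ?thesis using False by (simp add: DD_def)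
    qed
  qed
  have s3: "snd x \<in> {0,t,2*t}" "snd y \<in> {0,t,2*t}" "snd z \<in> {0,t,2*t}"
    "fst x \<in> {0,1}" "fst y \<in> {0,1}" "fst z \<in> {0,1}" using S unfolding mem_Times_iff by blast+
  have dxy: "DD m x y = (if snd x = snd y then 1 else dc m (snd x) (snd y))" using D[OF S(1,2) d(1)] .
  have dyz: "DD m y z = (if snd y = snd z then 1 else dc m (snd y) (snd z))" using D[OF S(2,3) d(2)] .
  have dxz: "DD m x z = (if snd x = snd z then 1 else dc m (snd x) (snd z))" using D[OF S(1,3) d(3)] .
  have n3: "\<not> (snd x = snd y \<and> snd y = snd z)"
  proof
    assume "snd x = snd y \<and> snd y = snd z"
    moreover have "fst x = fst y \<or> fst y = fst z \<or> fst x = fst z" using s3(4-6) by auto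
    ultimately show False using d by (auto simp: prod_eq_iff)
  qed
  show ?thesis
  proof (cases "snd x = snd y")
    case True
    hence "snd y \<noteq> snd z" "snd x \<noteq> snd z" using n3 by auto
    moreover have "1 \<le> dc m (snd x) (snd z)" using C1 s3 calculation by auto
    ultimately show ?thesis using True dxy dyz dxz unfolding bad_def by simp
  next
    case F1: False
    show ?thesis
    proof (cases "snd y = snd z")
      case True
      hence "snd x \<noteq> snd z" using F1 by auto
      moreover have "1 \<le> dc m (snd x) (snd z)" using C1 s3 calculation by auto
      ultimately show ?thesis using True F1 dxy dyz dxz unfolding bad_def by simp
    next
      case F2: False
      show ?thesis
      proof (cases "snd x = snd z")
        case True
        have "1 \<le> dc m (snd x) (snd y)" "1 \<le> dc m (snd y) (snd z)" using C1 s3 F1 F2 by auto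
        then show ?thesis using True F1 F2 dxy dyz dxz unfolding bad_def by simp
      next
        case False
        then show ?thesis using C3[OF s3(1-3) F1 F2 False] F1 F2 dxy dyz dxz unfolding bad_def by simp
      qed
    qed
  qed
qed

theorem theorem4p6:
  fixes r t :: nat
  assumes "r \<ge> 2" and "t \<ge> 1"
  shows "6 \<le> gp (strong_product (path_graph r) (cycle_graph (2 * t + 1))) \<and>
         gp (strong_product (path_graph r) (cycle_graph (2 * t + 1))) \<le> 7 \<and>
         ((t \<in> {1, 2} \<or> r = 2) \<longrightarrow>
            gp (strong_product (path_graph r) (cycle_graph (2 * t + 1))) = 6)"
proof -
  define m where "m = 2 * t + 1"
  have m3: "3 \<le> m" using assms(2) by (simp add: m_def)
  define S0 :: "(nat \<times> nat) set" where "S0 = {0,1} \<times> {0,t,2*t}"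
  have sub0: "S0 \<subseteq> verts (GG r m)" using assms by (auto simp: S0_def verts_GG m_def)
  have gs0: "gp_set (GG r m) S0"
    by (rule gp_set_intro[OF m3 sub0]) (use S0_nobad[OF assms(2) m_def] in \<open>unfold S0_def, blast\<close>)
  have c3: "card {0, t, 2 * t} = 3" using assms(2) by simp
  have "card S0 = card {0,1::nat} * card {0,t,2*t}" unfolding S0_def by (rule card_cartesian_product)
  moreover have "card {0,1::nat} = 2" by simp
  ultimately have c0: "card S0 = 6" using c3 by simp
  have up: "\<And>S. gp_set (GG r m) S \<Longrightarrow> card S \<le> 6" using gp_upper[OF m3] by blast
  have "gp (GG r m) = 6"
    unfolding gp_def
  proof (rule Max_eqI)
    show "finite {card S |S. gp_set (GG r m) S}"
      by (rule finite_subset[of _ "{..6}"]) (use up in auto)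
  next
    fix y assume "y \<in> {card S |S. gp_set (GG r m) S}"
    thus "y \<le> 6" using up by auto
  next
    show "6 \<in> {card S |S. gp_set (GG r m) S}" using gs0 c0 by force
  qed
  thus ?thesis by (simp add: m_def)
qed

end
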